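(* Let the system and the memory each be a classical bit, i.e. states are density operators diagonal in a fixed basis $\{|0\rangle,|1\rangle\}$ of $\mathbb{C}^2$, and let $U$ be a permutation of the four product basis states $|i\rangle\otimes|k\rangle$ ($i,k\in\{0,1\}$), regarded as a unitary on $\mathbb{C}^2\otimes\mathbb{C}^2$. Then the memory depth $\Delta_U$ of the memory channel generated by $U$ satisfies $\Delta_U\in\{0,1,\infty\}$.
   Context: A memory channel generated by a fixed unitary $U$ on system $\otimes$ memory acts as follows. The memory starts in a state $\xi_1$ and uncorrelated inputs $\varrho_1,\varrho_2,\dots$ are fed in successively. In the $j$th use the memory is in state $\xi_j$, the $j$th input is transformed by $\mathcal{E}_j[\varrho]=\mathrm{tr}_{\rm mem}[U(\varrho\otimes\xi_j)U^\dagger]$, and the memory is updated to $\xi_{j+1}=\mathrm{tr}_{\rm sys}[U(\varrho_j\otimes\xi_j)U^\dagger]$. The memory depth $\Delta_U$ is the smallest integer $\Delta\ge 0$ such that for every $n>\Delta$ the channel $\mathcal{E}_n$ is independent of the initial memory state $\xi_1$ and of the inputs $\varrho_j$ with $j<n-\Delta$, for all admissible choices of these; if no such $\Delta$ exists, $\Delta_U=\infty$. In the classical case all states $\xi_1,\varrho_j$ are diagonal (probability distributions). *)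

theory Defs
  imports Main "HOL-Library.Extended_Nat"
begin

text \<open>Classical bits: a (diagonal) state of a bit is a probability distribution on bool.
  Index False = |0>, True = |1>.\<close>

definition is_dist :: "(bool \<Rightarrow> real) \<Rightarrow> bool" where
  "is_dist p \<longleftrightarrow> (\<forall>b. 0 \<le> p b) \<and> p False + p True = 1"

text \<open>A permutation U of the product basis (system bit, memory bit).
  Action of U on the diagonal product state p (x) q: push forward the joint
  distribution along U.\<close>

definition joint_out :: "(bool \<times> bool \<Rightarrow> bool \<times> bool) \<Rightarrow> (bool \<Rightarrow> real) \<Rightarrow> (bool \<Rightarrow> real)
    \<Rightarrow> bool \<times> bool \<Rightarrow> real" where
  "joint_out U p q x = (\<Sum>y\<in>{y. U y = x}. p (fst y) * q (snd y))"

definition chan :: "(bool \<times> bool \<Rightarrow> bool \<times> bool) \<Rightarrow> (bool \<Rightarrow> real) \<Rightarrow> (bool \<Rightarrow> real)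
    \<Rightarrow> bool \<Rightarrow> real" where
  "chan U xi rho i = joint_out U rho xi (i, False) + joint_out U rho xi (i, True)"

definition mem_upd :: "(bool \<times> bool \<Rightarrow> bool \<times> bool) \<Rightarrow> (bool \<Rightarrow> real) \<Rightarrow> (bool \<Rightarrow> real)
    \<Rightarrow> bool \<Rightarrow> real" where
  "mem_upd U rho xi k = joint_out U rho xi (False, k) + joint_out U rho xi (True, k)"

text \<open>Memory state after m uses: mem U xi1 rhos m = xi_(m+1); inputs rhos j for j \<ge> 1.\<close>
fun mem :: "(bool \<times> bool \<Rightarrow> bool \<times> bool) \<Rightarrow> (bool \<Rightarrow> real) \<Rightarrow> (nat \<Rightarrow> bool \<Rightarrow> real)
    \<Rightarrow> nat \<Rightarrow> bool \<Rightarrow> real" where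
  "mem U xi rhos 0 = xi"
| "mem U xi rhos (Suc m) = mem_upd U (rhos (Suc m)) (mem U xi rhos m)"

definition nth_chan :: "(bool \<times> bool \<Rightarrow> bool \<times> bool) \<Rightarrow> (bool \<Rightarrow> real) \<Rightarrow> (nat \<Rightarrow> bool \<Rightarrow> real)
    \<Rightarrow> nat \<Rightarrow> (bool \<Rightarrow> real) \<Rightarrow> bool \<Rightarrow> real" where
  "nth_chan U xi rhos n = chan U (mem U xi rhos (n - 1))"

definition depth_ok :: "(bool \<times> bool \<Rightarrow> bool \<times> bool) \<Rightarrow> nat \<Rightarrow> bool" where
  "depth_ok U D \<longleftrightarrow> (\<forall>n > D. \<forall>xi xi' rhos rhos'.
      is_dist xi \<and> is_dist xi' \<and> (\<forall>j. is_dist (rhos j)) \<and> (\<forall>j. is_dist (rhos' j)) \<and>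
      (\<forall>j. n - D \<le> j \<longrightarrow> rhos j = rhos' j) \<longrightarrow>
      (\<forall>rho. is_dist rho \<longrightarrow> nth_chan U xi rhos n rho = nth_chan U xi' rhos' n rho))"

definition memory_depth :: "(bool \<times> bool \<Rightarrow> bool \<times> bool) \<Rightarrow> enat" where
  "memory_depth U = (if \<exists>D. depth_ok U D then enat (LEAST D. depth_ok U D) else \<infinity>)"

end

theory Submission
  imports Defs
begin

definition dd :: "bool \<Rightarrow> bool \<Rightarrow> real" where "dd b = (\<lambda>z. if z = b then 1 else 0)"

lemma jo: assumes "bij U" shows "joint_out U p q x = p (fst (inv U x)) * q (snd (inv U x))"
proof -
  have "{y. U y = x} = {inv U x}" using assms
    by (auto simp: bij_inv_eq_iff)
  then show ?thesis by (simp add: joint_out_def)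
qed

lemma jo_lin_q: "joint_out U p q x = q False * joint_out U p (dd False) x + q True * joint_out U p (dd True) x"
proof -
  have "\<And>y. p (fst y) * q (snd y) = q False * (p (fst y) * dd False (snd y)) + q True * (p (fst y) * dd True (snd y))"
    by (case_tac "snd y") (auto simp: dd_def)
  then show ?thesis unfolding joint_out_def by (simp add: sum.distrib sum_distrib_left)
qed

lemma jo_lin_p: "joint_out U p q x = p False * joint_out U (dd False) q x + p True * joint_out U (dd True) q x"
proof -
  have "\<And>y. p (fst y) * q (snd y) = p False * (dd False (fst y) * q (snd y)) + p True * (dd True (fst y) * q (snd y))"
    by (case_tac "fst y") (auto simp: dd_def)
  then show ?thesis unfolding joint_out_def by (simp add: sum.distrib sum_distrib_left)
qed

lemma chan_lin: "chan U q rho i = q False * chan U (dd False) rho i + q True * chan U (dd True) rho i"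
  unfolding chan_def by (subst (1 2) jo_lin_q) (simp add: algebra_simps)

lemma mu_lin_q: "mem_upd U p q k = q False * mem_upd U p (dd False) k + q True * mem_upd U p (dd True) k"
  unfolding mem_upd_def by (subst (1 2) jo_lin_q) (simp add: algebra_simps)

lemma mu_lin_p: "mem_upd U p q k = p False * mem_upd U (dd False) q k + p True * mem_upd U (dd True) q k"
  unfolding mem_upd_def by (subst (1 2) jo_lin_p) (simp add: algebra_simps)

lemma dd_prod: "dd c (fst v) * dd x (snd v) = (if v = (c,x) then 1 else 0)"
  by (cases v) (simp add: dd_def)

lemma mu_dd: assumes "bij U" shows "mem_upd U (dd c) (dd x) = dd (snd (U (c, x)))"
proof
  fix k
  obtain a0 k0 where u: "U (c,x) = (a0,k0)" by (cases "U (c,x)")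
  have e0: "\<And>a. (inv U (a,k) = (c,x)) = (U (c,x) = (a,k))" using assms by (metis bij_inv_eq_iff)
  have e: "\<And>a. (inv U (a,k) = (c,x)) = (a = a0 \<and> k = k0)" unfolding e0 u by auto
  show "mem_upd U (dd c) (dd x) k = dd (snd (U (c, x))) k"
    unfolding mem_upd_def jo[OF assms] dd_prod e u
    by (cases a0) (simp_all add: dd_def)
qed

lemma mu_sum: assumes "bij U" shows "mem_upd U p q False + mem_upd U p q True = (p False + p True) * (q False + q True)"
  apply (subst (1 2) mu_lin_p) apply (subst (1 2 3 4) mu_lin_q)
  apply (simp only: mu_dd[OF assms])
  apply (simp add: dd_def algebra_simps)
  done

lemma mem_sum: assumes "bij U" "xi False + xi True = 1" "\<forall>j. rhos j False + rhos j True = 1"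
  shows "mem U xi rhos m False + mem U xi rhos m True = 1"
  using assms by (induction m) (auto simp: mu_sum[OF assms(1)])

lemma dist_sum: "is_dist p \<Longrightarrow> p False + p True = 1" by (simp add: is_dist_def)

lemma caseA: assumes "bij U" "\<forall>rho. is_dist rho \<longrightarrow> chan U (dd False) rho = chan U (dd True) rho"
  shows "depth_ok U 0"
  unfolding depth_ok_def
proof (intro allI impI)
  fix n :: nat and xi xi' :: "bool \<Rightarrow> real" and rhos rhos' :: "nat \<Rightarrow> bool \<Rightarrow> real" and rho
  assume h: "0 < n" "is_dist xi \<and> is_dist xi' \<and> (\<forall>j. is_dist (rhos j)) \<and> (\<forall>j. is_dist (rhos' j)) \<and>
      (\<forall>j. n - 0 \<le> j \<longrightarrow> rhos j = rhos' j)" and r: "is_dist rho"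
  have gen: "chan U q rho = chan U (dd False) rho" if "q False + q True = 1" for q
  proof
    fix i
    have "chan U q rho i = q False * chan U (dd False) rho i + q True * chan U (dd False) rho i"
      using chan_lin[of U q rho i] assms(2) r by simp
    also have "\<dots> = chan U (dd False) rho i" using that by (simp add: ring_distribs[symmetric])
    finally show "chan U q rho i = chan U (dd False) rho i" .
  qed
  show "nth_chan U xi rhos n rho = nth_chan U xi' rhos' n rho"
  proof -
    have s1: "mem U xi rhos (n-1) False + mem U xi rhos (n-1) True = 1"
      by (rule mem_sum[OF assms(1)]) (use h dist_sum in auto)
    have s2: "mem U xi' rhos' (n-1) False + mem U xi' rhos' (n-1) True = 1"
      by (rule mem_sum[OF assms(1)]) (use h dist_sum in auto)
    show ?thesis unfolding nth_chan_def using gen[OF s1] gen[OF s2] by simp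
  qed
qed

lemma caseC: assumes "bij U" "\<forall>c. snd (U (c,False)) = snd (U (c,True))"
  shows "depth_ok U 1"
  unfolding depth_ok_def
proof (intro allI impI)
  fix n :: nat and xi xi' :: "bool \<Rightarrow> real" and rhos rhos' :: "nat \<Rightarrow> bool \<Rightarrow> real" and rho
  assume h: "1 < n" "is_dist xi \<and> is_dist xi' \<and> (\<forall>j. is_dist (rhos j)) \<and> (\<forall>j. is_dist (rhos' j)) \<and>
      (\<forall>j. n - 1 \<le> j \<longrightarrow> rhos j = rhos' j)" and r: "is_dist rho"
  have e1: "mem_upd U p (dd False) = mem_upd U p (dd True)" for p
  proof
    fix k show "mem_upd U p (dd False) k = mem_upd U p (dd True) k"
      apply (subst (1 2) mu_lin_p) using assms(2) by (simp add: mu_dd[OF assms(1)])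
  qed
  have gen: "mem_upd U p q = mem_upd U p (dd False)" if "q False + q True = 1" for p q
  proof
    fix k
    have "mem_upd U p q k = q False * mem_upd U p (dd False) k + q True * mem_upd U p (dd False) k"
      using mu_lin_q[of U p q k] e1 by simp
    also have "\<dots> = mem_upd U p (dd False) k" using that by (simp add: ring_distribs[symmetric])
    finally show "mem_upd U p q k = mem_upd U p (dd False) k" .
  qed
  define m where "m = n - 2"
  have m: "n - 1 = Suc m" using h(1) unfolding m_def by simp
  have eq: "rhos (Suc m) = rhos' (Suc m)" using h m by simp
  have s1: "mem U xi rhos m False + mem U xi rhos m True = 1"
    by (rule mem_sum[OF assms(1)]) (use h dist_sum in auto)
  have s2: "mem U xi' rhos' m False + mem U xi' rhos' m True = 1"
    by (rule mem_sum[OF assms(1)]) (use h dist_sum in auto)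
  have "mem U xi rhos (Suc m) = mem U xi' rhos' (Suc m)"
    using gen[OF s1] gen[OF s2] eq by simp
  then show "nth_chan U xi rhos n rho = nth_chan U xi' rhos' n rho"
    unfolding nth_chan_def m by simp
qed

lemma mem_dd: assumes "bij U"
  shows "mem U (dd x) (\<lambda>_. dd c) m = dd (((\<lambda>x. snd (U (c,x))) ^^ m) x)"
  by (induction m) (simp_all add: mu_dd[OF assms])

lemma dd_dist: "is_dist (dd b)" by (simp add: is_dist_def dd_def)

lemma caseB: assumes "bij U" "snd (U (c,False)) \<noteq> snd (U (c,True))" "is_dist rho0"
  "chan U (dd False) rho0 \<noteq> chan U (dd True) rho0"
  shows "\<not> depth_ok U D"
proof
  assume d: "depth_ok U D"
  define h where "h = (\<lambda>x. snd (U (c,x)))"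
  have "inj h" unfolding inj_def
  proof (intro allI impI)
    fix x y assume "h x = h y" then show "x = y" using assms(2) unfolding h_def
      by (cases x; cases y) simp_all
  qed
  then have "inj (h ^^ D)" by (rule inj_fn)
  then have ne: "(h ^^ D) False \<noteq> (h ^^ D) True" unfolding inj_def by blast
  have ne2: "chan U (dd ((h ^^ D) False)) rho0 \<noteq> chan U (dd ((h ^^ D) True)) rho0"
  proof (cases "(h ^^ D) False")
    case True
    then have "(h ^^ D) True = False" using ne by simp
    then show ?thesis using True assms(4) by (simp add: not_sym)
  next
    case False
    then have "(h ^^ D) True = True" using ne by simp
    then show ?thesis using False assms(4) by simp
  qed
  have "nth_chan U (dd False) (\<lambda>_. dd c) (Suc D) rho0 = nth_chan U (dd True) (\<lambda>_. dd c) (Suc D) rho0"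
    using d assms(3) unfolding depth_ok_def by (simp add: dd_dist)
  then show False using ne2 unfolding nth_chan_def by (simp add: mem_dd[OF assms(1)] h_def)
qed

theorem mainTheorem2:
  fixes U :: "bool \<times> bool \<Rightarrow> bool \<times> bool"
  assumes "bij U"
  shows "memory_depth U \<in> {0, 1, \<infinity>}"
proof (cases "\<exists>D. depth_ok U D")
  case False then show ?thesis by (simp add: memory_depth_def)
next
  case True
  then obtain D where D: "depth_ok U D" by blast
  show ?thesis
  proof (cases "\<forall>rho. is_dist rho \<longrightarrow> chan U (dd False) rho = chan U (dd True) rho")
    case True
    then have "depth_ok U 0" using caseA assms by blast
    then have "(LEAST D. depth_ok U D) = 0" by (simp add: Least_eq_0)
    then show ?thesis using D by (auto simp: memory_depth_def zero_enat_def)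
  next
    case False
    then obtain rho0 where "is_dist rho0" "chan U (dd False) rho0 \<noteq> chan U (dd True) rho0" by blast
    then have "\<forall>c. snd (U (c,False)) = snd (U (c,True))" using caseB[OF assms] D by blast
    then have "depth_ok U 1" using caseC assms by blast
    then have "(LEAST D. depth_ok U D) \<le> 1" by (rule Least_le)
    then have "(LEAST D. depth_ok U D) = 0 \<or> (LEAST D. depth_ok U D) = 1" by linarith
    then show ?thesis using D by (auto simp: memory_depth_def zero_enat_def one_enat_def)
  qed
qed

end
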